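(* Let $\mathcal{A}$ be a complex unital Banach algebra, let $p,q\in\mathcal{A}$ be idempotents, let $m\in\mathbb{N}$, and let $\gamma_1,\lambda_1,\dots,\lambda_m\in\mathbb{C}$ with $\lambda_1\gamma_1\neq0$. Then $$\lambda_1p+\gamma_1q-\lambda_1pq+\lambda_2\big(pqp-(pq)^2\big)+\cdots+\lambda_m\big((pq)^{m-1}p-(pq)^m\big)$$ is Drazin invertible (respectively, g-Drazin invertible) if and only if $$\lambda_1-\lambda_1pq+\lambda_2\big(pqp-(pq)^2\big)+\cdots+\lambda_m\big((pq)^{m-1}p-(pq)^m\big)$$ is Drazin invertible (respectively, g-Drazin invertible).
   Context: $\mathcal{A}$ is a complex unital Banach algebra with unit $1$; an idempotent is an element $e$ with $e^2=e$. An element $a$ is Drazin invertible if there exists $b\in\mathcal{A}$ with $ab=ba$, $bab=b$, and $(a(1-ab))^n=0$ for some $n\in\mathbb{N}$; g-Drazin invertible if there exists $b$ with $ab=ba$, $bab=b$, and $a(1-ab)$ quasinilpotent (spectral radius $0$). The terms $\lambda_k\big((pq)^{k-1}p-(pq)^k\big)$ for $k=2,\dots,m$ appear in the sums (for $m=1$ only the $\lambda_1$ terms appear). *)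

theory Defs
  imports "HOL-Analysis.Analysis"
begin

class complex_banach_algebra_1 = real_normed_algebra_1 + banach +
  fixes cscale :: "complex \<Rightarrow> 'a \<Rightarrow> 'a"
  assumes cscale_add_right: "cscale c (x + y) = cscale c x + cscale c y"
    and cscale_add_left: "cscale (c + d) x = cscale c x + cscale d x"
    and cscale_cscale: "cscale c (cscale d x) = cscale (c * d) x"
    and cscale_one: "cscale 1 x = x"
    and cscale_of_real: "cscale (of_real r) x = scaleR r x"
    and norm_cscale: "norm (cscale c x) = cmod c * norm x"
    and cscale_left_commute: "cscale c x * y = cscale c (x * y)"
    and cscale_right_commute: "x * cscale c y = cscale c (x * y)"

definition invertible_elem :: "'a::ring_1 \<Rightarrow> bool" where
  "invertible_elem x \<longleftrightarrow> (\<exists>y. x * y = 1 \<and> y * x = 1)"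

definition alg_spectrum :: "'a::complex_banach_algebra_1 \<Rightarrow> complex set" where
  "alg_spectrum a = {\<mu>. \<not> invertible_elem (cscale \<mu> 1 - a)}"

definition alg_spectral_radius :: "'a::complex_banach_algebra_1 \<Rightarrow> real" where
  "alg_spectral_radius a = Sup (cmod ` alg_spectrum a)"

definition quasinilpotent :: "'a::complex_banach_algebra_1 \<Rightarrow> bool" where
  "quasinilpotent a \<longleftrightarrow> alg_spectral_radius a = 0"

definition drazin_invertible :: "'a::ring_1 \<Rightarrow> bool" where
  "drazin_invertible a \<longleftrightarrow>
     (\<exists>b. a * b = b * a \<and> b * a * b = b \<and> (\<exists>n::nat. (a * (1 - a * b)) ^ n = 0))"

definition g_drazin_invertible :: "'a::complex_banach_algebra_1 \<Rightarrow> bool" where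
  "g_drazin_invertible a \<longleftrightarrow>
     (\<exists>b. a * b = b * a \<and> b * a * b = b \<and> quasinilpotent (a * (1 - a * b)))"

end

theory Submission
  imports Defs
begin


lemma cs1: "cscale c x = cscale c 1 * x"
  by (metis cscale_left_commute mult_1_left)
lemma cs1r: "cscale c x = x * cscale c 1"
  by (metis cscale_right_commute mult_1_right)
lemma cs_central: "cscale c 1 * x = x * cscale c 1"
  using cs1 cs1r by metis
lemma cs_mult: "cscale c 1 * cscale d 1 = cscale (c*d) (1::'a::complex_banach_algebra_1)"
  by (simp add: cscale_left_commute cscale_cscale)
lemma cs_one: "cscale 1 x = x" by (rule cscale_one)
lemma cs_zero: "cscale 0 x = 0"
  using cscale_of_real[of 0 x] by simp
lemma cs_inv: "c \<noteq> 0 \<Longrightarrow> cscale (inverse c) 1 * cscale c 1 = (1::'a::complex_banach_algebra_1)"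
  by (simp add: cs_mult cs_one)
lemma cs_inv2: "c \<noteq> 0 \<Longrightarrow> cscale c 1 * cscale (inverse c) 1 = (1::'a::complex_banach_algebra_1)"
  by (simp add: cs_mult cs_one)
lemma cs_diff: "cscale c (x - y) = cscale c x - cscale c (y::'a::complex_banach_algebra_1)"
  by (metis cs1 right_diff_distrib)

lemma inv_mult: "invertible_elem x \<Longrightarrow> invertible_elem y \<Longrightarrow> invertible_elem (x*(y::'a::ring_1))"
  unfolding invertible_elem_def
proof (elim exE conjE)
  fix x' y' assume h: "x * x' = 1" "x' * x = 1" "y * y' = 1" "y' * y = 1"
  have "x * y * (y' * x') = 1" by (metis h(1,3) mult.assoc mult_1_left mult_1_right)
  moreover have "(y' * x') * (x * y) = 1" by (metis h(2,4) mult.assoc mult_1_left mult_1_right)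
  ultimately show "\<exists>z. x * y * z = 1 \<and> z * (x * y) = 1" by blast
qed

lemma inv_cs: "c \<noteq> 0 \<Longrightarrow> invertible_elem (cscale c (1::'a::complex_banach_algebra_1))"
  unfolding invertible_elem_def using cs_inv cs_inv2 by blast

lemma inv_commute: "x * y = 1 \<Longrightarrow> y * x = 1 \<Longrightarrow> c * x = x * c \<Longrightarrow> c * y = y * (c::'a::ring_1)"
  by (metis mult.assoc mult_1_left mult_1_right)

definition nilp :: "'a::ring_1 \<Rightarrow> bool" where "nilp w \<longleftrightarrow> (\<exists>n. w^n = 0)"
definition Nq :: "'a::complex_banach_algebra_1 \<Rightarrow> bool" where
  "Nq w \<longleftrightarrow> (\<forall>\<mu>. \<mu> \<noteq> 0 \<longrightarrow> invertible_elem (cscale \<mu> 1 - w))"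
definition DP :: "('a::ring_1 \<Rightarrow> bool) \<Rightarrow> 'a \<Rightarrow> bool" where
  "DP P a \<longleftrightarrow> (\<exists>b. a*b = b*a \<and> b*a*b = b \<and> P (a*(1 - a*b)))"
definition goodP :: "('a::complex_banach_algebra_1 \<Rightarrow> bool) \<Rightarrow> bool" where
  "goodP P \<longleftrightarrow> (\<forall>w. P w \<longrightarrow> Nq w) \<and> (\<forall>u v::'a. P (v * u) \<longrightarrow> P (u * v)) \<and>
     (\<forall>c w. c \<noteq> 0 \<longrightarrow> P w \<longrightarrow> P (cscale c w))"

lemma pow_swap: "(u * v)^(Suc n) = u * (v * u)^n * (v::'a::ring_1)"
  by (induction n) (simp_all add: mult.assoc)

lemma cs_pow: "cscale c w ^ n = cscale (c^n) (w^n :: 'a::complex_banach_algebra_1)"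
proof (induction n)
  case 0 then show ?case by (simp add: cs_one)
next
  case (Suc n)
  then show ?case
    by (simp add: cscale_left_commute cscale_right_commute cscale_cscale mult.commute)
qed

lemma geo_fin: "(1 - w) * (\<Sum>i<n. w^i) = 1 - w^n" "(\<Sum>i<n. w^i) * (1 - w) = 1 - (w::'a::ring_1)^n"
proof (induction n)
  case 0 case 1 show ?case by simp
next
  case 0 case 2 show ?case by simp
next
  case (Suc n) case 1
  have "(1-w) * (\<Sum>i<Suc n. w^i) = (1-w) * (\<Sum>i<n. w^i) + (1-w)*w^n" by (simp add: distrib_left)
  also have "... = 1 - w^n + (w^n - w*w^n)" using Suc(1) by (simp add: left_diff_distrib)
  also have "... = 1 - w^Suc n" by (simp add: power_Suc)
  finally show ?case .
next
  case (Suc n) case 2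
  have "(\<Sum>i<Suc n. w^i) * (1-w) = (\<Sum>i<n. w^i)*(1-w) + w^n*(1-w)" by (simp add: distrib_right)
  also have "... = 1 - w^n + (w^n - w^n*w)" using Suc(2) by (simp add: right_diff_distrib)
  also have "... = 1 - w^Suc n" by (simp add: power_Suc2 power_commutes)
  finally show ?case .
qed

lemma nilp_Nq: "nilp w \<Longrightarrow> Nq (w::'a::complex_banach_algebra_1)"
  unfolding Nq_def
proof (intro allI impI)
  fix \<mu> :: complex assume "nilp w" "\<mu> \<noteq> 0"
  then obtain n where n: "w^n = 0" unfolding nilp_def by blast
  let ?w = "cscale (inverse \<mu>) w"
  have "?w^n = 0" by (simp add: cs_pow n cs1[of _ 0])
  then have "invertible_elem (1 - ?w)" unfolding invertible_elem_def using geo_fin[of ?w n] by auto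
  moreover have "cscale \<mu> 1 - w = cscale \<mu> 1 * (1 - ?w)"
    using \<open>\<mu> \<noteq> 0\<close> by (simp add: right_diff_distrib cscale_left_commute cscale_cscale cs_one)
  ultimately show "invertible_elem (cscale \<mu> 1 - w)" using inv_mult inv_cs \<open>\<mu> \<noteq> 0\<close> by metis
qed

lemma goodP_nilp: "goodP (nilp :: 'a::complex_banach_algebra_1 \<Rightarrow> bool)"
  unfolding goodP_def
proof (intro conjI allI impI)
  fix w :: 'a assume "nilp w" then show "Nq w" by (rule nilp_Nq)
next
  fix u v :: 'a assume "nilp (v * u)"
  then obtain n where "(v * u)^n = 0" unfolding nilp_def by blast
  then have "(u * v)^Suc n = 0" by (simp only: pow_swap) simp
  then show "nilp (u * v)" unfolding nilp_def by blast
next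
  fix c :: complex and w :: 'a assume "nilp w"
  then obtain n where "w^n = 0" unfolding nilp_def by blast
  then have "(cscale c w)^n = 0" by (simp add: cs_pow cs1[of _ 0])
  then show "nilp (cscale c w)" unfolding nilp_def by blast
qed

lemma jac_inv:
  assumes "invertible_elem (cscale \<mu> 1 - v * u)" "\<mu> \<noteq> 0"
  shows "invertible_elem (cscale \<mu> 1 - u*(v::'a::complex_banach_algebra_1))"
proof -
  let ?k = "cscale \<mu> (1::'a)"
  obtain s where s: "(?k - v * u)* s = 1" "s *(?k - v * u) = 1" using assms(1) unfolding invertible_elem_def by blast
  have ku: "?k * u = u * ?k" "?k * v = v * ?k" using cs_central by blast+
  have e1: "(?k - u* v) * (1 + u* s * v) = ?k"
  proof -
    have "(?k - u* v) * (1 + u* s * v) = ?k - u* v + (?k*u* s * v - u* v * u* s * v)" by (simp add: algebra_simps)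
    also have "?k*u* s * v - u* v * u* s * v = u*((?k - v * u)* s)* v" using ku by (simp add: algebra_simps)
    also have "... = u* v" using s by simp
    finally show ?thesis by simp
  qed
  have e2: "(1 + u* s * v) * (?k - u* v) = ?k"
  proof -
    have "(1 + u* s * v) * (?k - u* v) = ?k - u* v + (u* s * v *?k - u* s * v * u* v)" by (simp add: algebra_simps)
    also have "u* s * v *?k - u* s * v * u* v = u*(s *(?k - v * u))* v" using ku by (simp add: algebra_simps)
    also have "... = u* v" using s by simp
    finally show ?thesis by simp
  qed
  let ?r = "cscale (inverse \<mu>) 1 * (1 + u* s * v)"
  have "(?k - u* v) * ?r = 1"
    by (metis (no_types, lifting) assms(2) cs_central cs_inv e1 mult.assoc)
  moreover have "?r * (?k - u* v) = 1"
    by (metis assms(2) cs_inv e2 mult.assoc)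
  ultimately show ?thesis unfolding invertible_elem_def by blast
qed

lemma goodP_Nq: "goodP (Nq :: 'a::complex_banach_algebra_1 \<Rightarrow> bool)"
  unfolding goodP_def
proof (intro conjI allI impI)
  fix w :: 'a assume "Nq w" then show "Nq w" .
next
  fix u v :: 'a assume "Nq (v * u)"
  then show "Nq (u * v)" unfolding Nq_def using jac_inv by blast
next
  fix c :: complex and w :: 'a assume c: "c \<noteq> 0" and "Nq w"
  show "Nq (cscale c w)" unfolding Nq_def
  proof (intro allI impI)
    fix \<mu> :: complex assume "\<mu> \<noteq> 0"
    then have "invertible_elem (cscale (\<mu> / c) 1 - w)" using \<open>Nq w\<close> c unfolding Nq_def by simp
    moreover have "cscale \<mu> 1 - cscale c w = cscale c 1 * (cscale (\<mu> / c) 1 - w)"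
      using c by (simp add: right_diff_distrib cscale_left_commute cscale_cscale cs_one)
    ultimately show "invertible_elem (cscale \<mu> 1 - cscale c w)" using inv_mult inv_cs c by metis
  qed
qed



lemma DP_scale:
  assumes g: "goodP P" and c: "c \<noteq> 0" and d: "DP P a"
  shows "DP P (cscale c (a::'a::complex_banach_algebra_1))"
proof -
  obtain b where b: "a * b = b * a" "b * a * b = b" "P (a * (1 - a * b))" using d unfolding DP_def by blast
  let ?b = "cscale (inverse c) b"
  have 1: "cscale c a * ?b = a * b" using c
    by (simp add: cscale_left_commute cscale_right_commute cscale_cscale cs_one)
  have 2: "?b * cscale c a = b * a" using c
    by (simp add: cscale_left_commute cscale_right_commute cscale_cscale cs_one)
  have 3: "?b * cscale c a * ?b = ?b" using 2 b(2)
    by (simp add: cscale_left_commute cscale_right_commute cscale_cscale cs_one)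
  have 4: "cscale c a * (1 - cscale c a * ?b) = cscale c (a * (1 - a * b))"
    using 1 by (simp add: cscale_left_commute)
  have "P (cscale c (a * (1 - a * b)))" using g c b(3) unfolding goodP_def by blast
  then show ?thesis unfolding DP_def using 1 2 3 4 b(1) by metis
qed

lemma DP_scale_iff:
  assumes g: "goodP P" and c: "c \<noteq> 0"
  shows "DP P (cscale c (a::'a::complex_banach_algebra_1)) \<longleftrightarrow> DP P a"
proof
  assume "DP P (cscale c a)"
  from DP_scale[OF g _ this, of "inverse c"] c show "DP P a"
    by (simp add: cscale_cscale cs_one)
qed (rule DP_scale[OF g c])

lemma DP_cline:
  assumes g: "goodP P" and d: "DP P (a * b)"
  shows "DP P (b * (a::'a::complex_banach_algebra_1))"
proof -
  obtain d where d: "a * b * d = d * (a * b)" "d * (a * b) * d = d" "P (a * b * (1 - a * b * d))"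
    using d unfolding DP_def by blast
  let ?d = "b * d * d * a"
  have d1: "a * (b * (d * z)) = d * (a * (b * z))" for z using d(1) by (metis mult.assoc)
  have 1: "b * a * ?d = b * d * a"
  proof -
    have "b * a * ?d = b * (a * b * d) * d * a" by (simp add: mult.assoc)
    also have "... = b * (d * (a * b) * d) * a" by (simp add: d1 mult.assoc)
    finally show ?thesis by (simp add: d(2))
  qed
  have 2: "?d * (b * a) = b * d * a"
  proof -
    have "?d * (b * a) = b * d * (d * (a * b)) * a" by (simp add: mult.assoc)
    also have "... = b * (d * (a * b) * d) * a" by (simp add: d1 mult.assoc)
    finally show ?thesis by (simp add: d(2))
  qed
  have 3: "?d * (b * a) * ?d = ?d"
  proof -
    have d2: "d * (a * (b * (d * z))) = d * z" for z using d(2) by (metis mult.assoc)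
    show ?thesis using 2 by (simp add: d2 mult.assoc)
  qed
  have 4: "b * a * (1 - b * a * ?d) = b * ((1 - a * b * d) * a)"
    using 1 by (simp add: algebra_simps)
  have "(1 - a * b * d) * a * b = a * b * (1 - a * b * d)"
    using d(1) by (simp add: algebra_simps d1 mult.assoc)
  then have "P (((1 - a * b * d) * a) * b)" using d(3) by (simp add: mult.assoc)
  then have "P (b * ((1 - a * b * d) * a))" using g unfolding goodP_def by blast
  then show ?thesis unfolding DP_def using 1 2 3 4 by metis
qed

lemma DP_cline_iff:
  "goodP P \<Longrightarrow> DP P (a * b) \<longleftrightarrow> DP P (b * (a::'a::complex_banach_algebra_1))"
  using DP_cline by blast



lemma DP_jac:
  assumes g: "goodP P" and dp: "DP P (1 - a * b)"
  shows "DP P (1 - b * (a::'a::complex_banach_algebra_1))"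
proof -
  define al where "al = 1 - a * b"
  obtain d where d: "al * d = d * al" "d * al * d = d" "P (al * (1 - al * d))"
    using dp unfolding DP_def al_def by blast
  define pi where "pi = 1 - al * d"
  have ab: "a * b = 1 - al" by (simp add: al_def)
  have pal: "pi * al = al * pi" by (simp add: pi_def algebra_simps) (metis d(1) mult.assoc)
  have pd: "pi * d = 0" using d by (simp add: pi_def algebra_simps mult.assoc)
  have dp0: "d * pi = 0" using d by (simp add: pi_def algebra_simps mult.assoc)
  have pp: "pi * pi = pi"
  proof -
    have "pi * pi = pi - pi * al * d" by (simp add: pi_def algebra_simps)
    also have "pi * al * d = al * (pi * d)" using pal by (metis mult.assoc)
    finally show ?thesis using pd by simp
  qed
  have "Nq (al * pi)" using g d(3) unfolding goodP_def pi_def by blast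
  then have "invertible_elem (1 - al * pi)" unfolding Nq_def using cs_one[of "1::'a"]
    by (metis one_neq_zero)
  then obtain t where t: "(1 - al * pi) * t = 1" "t * (1 - al * pi) = 1" unfolding invertible_elem_def by blast
  have c1: "pi * (1 - al * pi) = (1 - al * pi) * pi"
    by (simp add: algebra_simps pal mult.assoc[symmetric] pp)
  have c2: "al * (1 - al * pi) = (1 - al * pi) * al"
    by (simp add: algebra_simps pal mult.assoc)
  have tp: "pi * t = t * pi" using inv_commute[OF t c1] .
  have tal: "al * t = t * al" using inv_commute[OF t c2] .
  have palp: "pi * al * pi = al * pi" by (metis mult.assoc pal pp)
  have pt: "pi * t = pi + al * pi * t"
  proof -
    have "t = 1 + al * pi * t" using t(1) by (simp add: algebra_simps)
    then have "pi * t = pi + pi * al * pi * t" by (metis distrib_left mult.assoc mult_1_right)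
    then show ?thesis using palp by simp
  qed
  have ptab: "pi * t * (a * b) = pi"
  proof -
    have "pi * (al * pi) = pi * al" by (metis mult.assoc palp pal)
    then have "pi * (1 - al) = pi * (1 - al * pi)" by (simp add: right_diff_distrib)
    then have "pi * t * (1 - al) = t * (pi * (1 - al * pi))" by (metis mult.assoc tp)
    also have "... = pi" using c1 t(2) by (metis mult.assoc mult_1_left)
    finally show ?thesis by (simp add: ab)
  qed
  have ptab': "pi * (t * (a * (b * z))) = pi * z" for z
  proof -
    have "pi * (t * (a * (b * z))) = (pi * t * (a * b)) * z" by (simp only: mult.assoc)
    then show ?thesis unfolding ptab .
  qed
  have pd': "pi * (d * z) = 0" for z
  proof -
    have "pi * (d * z) = (pi * d) * z" by (simp only: mult.assoc)
    then show ?thesis unfolding pd by simp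
  qed
  have pp': "pi * (pi * z) = pi * z" for z
  proof -
    have "pi * (pi * z) = (pi * pi) * z" by (simp only: mult.assoc)
    then show ?thesis unfolding pp .
  qed
  define tau where "tau = b * pi * t * a"
  define D where "D = 1 + b * d * a - tau"
  have bal: "(1 - b * a) * b = b * al" by (simp add: al_def algebra_simps)
  have ala: "a * (1 - b * a) = al * a" by (simp add: al_def algebra_simps)
  have i1: "(1 - b * a) * (1 + b * d * a) = 1 - b * pi * a"
  proof -
    have "(1 - b * a) * (1 + b * d * a) = 1 - b * a + (1 - b * a) * b * d * a" by (simp add: algebra_simps)
    also have "... = 1 - b * a + b * (al * d) * a" using bal by (simp add: mult.assoc)
    also have "... = 1 - b * pi * a" by (simp add: pi_def algebra_simps)
    finally show ?thesis .
  qed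
  have i2: "(1 + b * d * a) * (1 - b * a) = 1 - b * pi * a"
  proof -
    have "(1 + b * d * a) * (1 - b * a) = 1 - b * a + b * d * (a * (1 - b * a))" by (simp add: algebra_simps)
    also have "... = 1 - b * a + b * (al * d) * a" using ala d(1) by (simp add: mult.assoc)
    also have "... = 1 - b * pi * a" by (simp add: pi_def algebra_simps)
    finally show ?thesis .
  qed
  have i3: "(1 - b * a) * tau = b * (al * pi * t) * a"
  proof -
    have "(1 - b * a) * tau = ((1 - b * a) * b) * (pi * t * a)" unfolding tau_def by (simp only: mult.assoc)
    then show ?thesis unfolding bal by (simp only: mult.assoc)
  qed
  have i4: "tau * (1 - b * a) = b * (al * pi * t) * a"
  proof -
    have "tau * (1 - b * a) = b * (pi * t * al) * a" unfolding tau_def using ala by (simp add: mult.assoc)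
    also have "pi * t * al = al * pi * t" by (metis mult.assoc pal tal tp)
    finally show ?thesis .
  qed
  have i5: "b * pi * a + b * (al * pi * t) * a = tau"
  proof -
    have "b * pi * a + b * (al * pi * t) * a = b * (pi + al * pi * t) * a" by (simp add: algebra_simps)
    also have "... = b * (pi * t) * a" using pt by simp
    finally show ?thesis unfolding tau_def by (simp only: mult.assoc)
  qed
  have e1: "(1 - b * a) * D = 1 - tau"
  proof -
    have "(1 - b * a) * D = (1 - b * a) * (1 + b * d * a) - (1 - b * a) * tau"
      unfolding D_def by (simp only: right_diff_distrib)
    also have "... = 1 - (b * pi * a + b * (al * pi * t) * a)" unfolding i1 i3 by simp
    finally show ?thesis unfolding i5 .
  qed
  have e2: "D * (1 - b * a) = 1 - tau"
  proof -
    have "D * (1 - b * a) = (1 + b * d * a) * (1 - b * a) - tau * (1 - b * a)"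
      unfolding D_def by (simp only: left_diff_distrib)
    also have "... = 1 - (b * pi * a + b * (al * pi * t) * a)" unfolding i2 i4 by simp
    finally show ?thesis unfolding i5 .
  qed
  have tb: "tau * (b * d * a) = 0"
  proof -
    have "tau * (b * d * a) = b * (pi * t * (a * b)) * d * a" unfolding tau_def by (simp add: mult.assoc)
    then show ?thesis by (simp add: mult.assoc ptab' pd')
  qed
  have tt: "tau * tau = tau"
  proof -
    have "tau * tau = b * (pi * t * (a * b)) * pi * t * a" unfolding tau_def by (simp add: mult.assoc)
    then show ?thesis unfolding tau_def by (simp add: mult.assoc ptab' pp')
  qed
  have e3: "D * (1 - b * a) * D = D"
  proof -
    have "D * (1 - b * a) * D = (1 - tau) * D" using e2 by simp
    also have "... = D - (tau + tau * (b * d * a) - tau * tau)" unfolding D_def by (simp add: algebra_simps)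
    finally show ?thesis using tb tt by simp
  qed
  have e4: "(1 - b * a) * (1 - (1 - b * a) * D) = b * (al * pi * t * a)"
    using e1 i3 by (simp add: mult.assoc)
  have "al * pi * t * a * b = al * pi"
    using ptab by (metis mult.assoc)
  then have "P (al * pi * t * a * b)" using d(3) by (simp add: pi_def)
  then have "P (b * (al * pi * t * a))" using g unfolding goodP_def by (metis mult.assoc)
  then show ?thesis unfolding DP_def using e1 e2 e3 e4 by metis
qed

lemma DP_jac_iff:
  "goodP P \<Longrightarrow> DP P (1 - a * b) \<longleftrightarrow> DP P (1 - b * (a::'a::complex_banach_algebra_1))"
  using DP_jac by blast



lemma cs0: "cscale c (0::'a::complex_banach_algebra_1) = 0"
  by (metis cs1 mult_zero_right)

lemmas css = cscale_left_commute cscale_right_commute cscale_cscale cs_one cs0 cscale_add_right cs_diff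

lemma DP_block1:
  assumes g: "goodP P" and ee: "e * e = e" and bt: "\<beta> \<noteq> 0" and ev: "e * v = 0" and ve: "v * e = 0"
    and dv: "DP P v"
  shows "DP P (cscale \<beta> e + (v::'a::complex_banach_algebra_1))"
proof -
  obtain d' where d': "v * d' = d' * v" "d' * v * d' = d'" "P (v * (1 - v * d'))"
    using dv unfolding DP_def by blast
  have d'e: "d' * e = 0"
  proof -
    have "d' * e = d' * (d' * v) * e" using d' by (metis mult.assoc)
    also have "... = d' * d' * (v * e)" by (simp only: mult.assoc)
    finally show ?thesis using ve by simp
  qed
  have ed': "e * d' = 0"
  proof -
    have "e * d' = e * (v * d') * d'" using d' by (metis mult.assoc)
    also have "... = (e * v) * d' * d'" by (simp only: mult.assoc)
    finally show ?thesis using ev by simp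
  qed
  have ee': "e * (e * z) = e * z" for z by (metis ee mult.assoc)
  have ev': "e * (v * z) = 0" for z by (metis ev mult.assoc mult_zero_left)
  have ve': "v * (e * z) = 0" for z by (metis ve mult.assoc mult_zero_left)
  have d'e': "d' * (e * z) = 0" for z by (metis d'e mult.assoc mult_zero_left)
  have ed'': "e * (d' * z) = 0" for z by (metis ed' mult.assoc mult_zero_left)
  have vd': "v * (d' * z) = d' * (v * z)" for z by (metis d'(1) mult.assoc)
  have dvd: "d' * (v * (d' * z)) = d' * z" for z by (metis d'(2) mult.assoc)
  have dvd0: "d' * (v * d') = d'" by (metis d'(2) mult.assoc)
  let ?z = "cscale \<beta> e + v" and ?d = "cscale (inverse \<beta>) e + d'"
  have 1: "?z * ?d = e + v * d'" using bt
    by (simp add: css algebra_simps ee ev ve d'e ed')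
  have 2: "?d * ?z = e + v * d'" using bt
    by (simp add: css algebra_simps ee ev ve d'e ed' d'(1))
  have 3: "?d * ?z * ?d = ?d" unfolding 2 using bt
    by (simp add: css algebra_simps ee ev ve d'e ed' ee' ev' ve' d'e' ed'' vd' dvd dvd0)
  have 4: "?z * (1 - ?z * ?d) = v * (1 - v * d')" unfolding 1 using bt
    by (simp add: css algebra_simps ee ev ve d'e ed' ee' ev' ve' d'e' ed'' vd' dvd dvd0)
  show ?thesis unfolding DP_def using 1 2 3 4 d'(3) by metis
qed

lemma DP_block2:
  assumes g: "goodP P" and ee: "e * e = e" and bt: "\<beta> \<noteq> 0" and ev: "e * v = 0" and ve: "v * e = 0"
    and dz: "DP P (cscale \<beta> e + (v::'a::complex_banach_algebra_1))"
  shows "DP P v"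
proof -
  define z where "z = cscale \<beta> e + v"
  obtain d where d: "z * d = d * z" "d * z * d = d" "P (z * (1 - z * d))"
    using dz unfolding DP_def z_def by blast
  define pi where "pi = 1 - z * d"
  have ze: "z * e = cscale \<beta> e" unfolding z_def by (simp add: css algebra_simps ee ve)
  have ez: "e * z = cscale \<beta> e" unfolding z_def by (simp add: css algebra_simps ee ev)
  have zdzd: "z * (d * (z * d)) = z * d" by (metis d(2) mult.assoc)
  have pp: "pi * pi = pi" unfolding pi_def by (simp add: algebra_simps zdzd)
  have zp: "z * pi = pi * z"
  proof -
    have "z * (z * d) = z * (d * z)" using d(1) by simp
    then show ?thesis unfolding pi_def by (simp add: right_diff_distrib left_diff_distrib mult.assoc)
  qed
  have "Nq (z * pi)" using g d(3) unfolding goodP_def pi_def by blast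
  then obtain s where s: "(cscale \<beta> 1 - z * pi) * s = 1" "s * (cscale \<beta> 1 - z * pi) = 1"
    using bt unfolding Nq_def invertible_elem_def by blast
  have "(cscale \<beta> 1 - z * pi) * (pi * e) = cscale \<beta> (pi * e) - pi * (z * e)"
  proof -
    have "(cscale \<beta> 1 - z * pi) * (pi * e) = cscale \<beta> (pi * e) - (z * pi) * pi * e"
      by (simp add: left_diff_distrib css mult.assoc)
    also have "(z * pi) * pi * e = pi * (z * e)"
    proof -
      have "(z * pi) * pi * e = z * (pi * pi) * e" by (simp only: mult.assoc)
      also have "... = (z * pi) * e" unfolding pp by (simp only: mult.assoc)
      also have "... = pi * (z * e)" unfolding zp by (simp only: mult.assoc)
      finally show ?thesis .
    qed
    finally show ?thesis .
  qed
  then have "(cscale \<beta> 1 - z * pi) * (pi * e) = 0" unfolding ze by (simp add: css)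
  then have pe: "pi * e = 0"
  proof -
    assume h: "(cscale \<beta> 1 - z * pi) * (pi * e) = 0"
    have "pi * e = (s * (cscale \<beta> 1 - z * pi)) * (pi * e)" unfolding s(2) by simp
    also have "... = s * ((cscale \<beta> 1 - z * pi) * (pi * e))" by (simp only: mult.assoc)
    finally show ?thesis unfolding h by simp
  qed
  have "(e * pi) * (cscale \<beta> 1 - z * pi) = cscale \<beta> (e * pi) - (e * z) * pi"
  proof -
    have "(e * pi) * (cscale \<beta> 1 - z * pi) = cscale \<beta> (e * pi) - e * (pi * z) * pi"
      by (simp add: right_diff_distrib css mult.assoc)
    also have "e * (pi * z) * pi = (e * z) * pi"
    proof -
      have "e * (pi * z) * pi = e * (z * (pi * pi))" unfolding zp[symmetric] by (simp only: mult.assoc)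
      also have "... = (e * z) * pi" unfolding pp by (simp only: mult.assoc)
      finally show ?thesis .
    qed
    finally show ?thesis .
  qed
  then have "(e * pi) * (cscale \<beta> 1 - z * pi) = 0" unfolding ez by (simp add: css)
  then have ep: "e * pi = 0"
  proof -
    assume h: "(e * pi) * (cscale \<beta> 1 - z * pi) = 0"
    have "e * pi = (e * pi) * ((cscale \<beta> 1 - z * pi) * s)" unfolding s(1) by simp
    also have "... = ((e * pi) * (cscale \<beta> 1 - z * pi)) * s" by (simp only: mult.assoc)
    finally show ?thesis unfolding h by simp
  qed
  have ezd: "e * (z * d) = e" using ep unfolding pi_def by (simp add: algebra_simps)
  have zde: "z * d * e = e" using pe unfolding pi_def by (simp add: algebra_simps)
  have de: "d * e = cscale (inverse \<beta>) e"
  proof -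
    have "d * e = d * cscale (inverse \<beta>) (z * e)" unfolding ze using bt by (simp add: css)
    also have "... = cscale (inverse \<beta>) (z * d * e)" by (simp add: css d(1) mult.assoc)
    finally show ?thesis using zde by simp
  qed
  have ed: "e * d = cscale (inverse \<beta>) e"
  proof -
    have "e * d = cscale (inverse \<beta>) (e * z) * d" unfolding ez using bt by (simp add: css)
    also have "... = cscale (inverse \<beta>) (e * (z * d))" by (simp add: css mult.assoc)
    finally show ?thesis using ezd by simp
  qed
  define d' where "d' = d - cscale (inverse \<beta>) e"
  have v: "v = z - cscale \<beta> e" unfolding z_def by simp
  have 1: "v * d' = z * d - e" unfolding v d'_def using bt
    by (simp add: css algebra_simps ze ed ee)
  have 2: "d' * v = z * d - e" unfolding v d'_def using bt
    by (simp add: css algebra_simps ez de ee d(1))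
  have dze: "d * z * e = e" using zde d(1) by simp
  have dze': "d * (z * e) = e" using dze by (simp add: mult.assoc)
  have zde': "z * (d * e) = e" using zde by (simp add: mult.assoc)
  have d2': "d * (z * d) = d" using d(2) by (simp add: mult.assoc)
  have zdd: "z * (d * d) = d" using d(2) d(1) by (metis mult.assoc)
  have ze': "z * (e * x) = cscale \<beta> (e * x)" for x using ze by (metis cscale_left_commute mult.assoc)
  have 3: "d' * v * d' = d'" unfolding 2 unfolding d'_def using bt
    by (simp add: css algebra_simps zde' ed dze' d2' zdd ee)
  have 4: "v * (1 - v * d') = z * (1 - z * d)" unfolding 1 unfolding v using bt
    by (simp add: css algebra_simps ez ed ze ze' ezd ee)
  show ?thesis unfolding DP_def using 1 2 3 4 d(3) by metis
qed

lemma DP_block: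
  "goodP P \<Longrightarrow> e * e = e \<Longrightarrow> \<beta> \<noteq> 0 \<Longrightarrow> e * v = 0 \<Longrightarrow> v * e = 0 \<Longrightarrow>
   DP P (cscale \<beta> e + (v::'a::complex_banach_algebra_1)) \<longleftrightarrow> DP P v"
  using DP_block1 DP_block2 by blast



lemma neumann:
  assumes "norm (z::'a::complex_banach_algebra_1) < 1"
  shows "invertible_elem (1 - z)"
proof -
  define f where "f = (\<lambda>n. z ^ n)"
  have sm: "summable f" unfolding f_def using complete_algebra_summable_geometric[OF assms] .
  define s where "s = suminf f"
  have fs: "f sums s" using sm unfolding s_def by (rule summable_sums)
  have "(\<lambda>n. z * f n) sums (z * s)" using fs by (rule sums_mult)
  then have "(\<lambda>n. f (Suc n)) sums (z * s)" unfolding f_def by simp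
  then have "f sums (z * s + f 0)" by (simp add: sums_Suc_iff)
  then have 1: "s = z * s + 1" using fs sums_unique2 unfolding f_def by fastforce
  have "(\<lambda>n. f n * z) sums (s * z)" using fs by (rule sums_mult2)
  then have "(\<lambda>n. f (Suc n)) sums (s * z)" unfolding f_def by (simp add: power_commutes)
  then have "f sums (s * z + f 0)" by (simp add: sums_Suc_iff)
  then have 2: "s = s * z + 1" using fs sums_unique2 unfolding f_def by fastforce
  have "(1 - z) * s = 1" using 1 by (simp add: left_diff_distrib) (metis add_diff_cancel_left')
  moreover have "s * (1 - z) = 1" using 2 by (simp add: right_diff_distrib) (metis add_diff_cancel_left')
  ultimately show ?thesis unfolding invertible_elem_def by blast
qed

lemma spec_bound:
  assumes "\<mu> \<in> alg_spectrum (z::'a::complex_banach_algebra_1)"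
  shows "cmod \<mu> \<le> norm z"
proof (rule ccontr)
  assume "\<not> cmod \<mu> \<le> norm z"
  then have lt: "norm z < cmod \<mu>" by simp
  then have mu: "\<mu> \<noteq> 0" using norm_ge_zero[of z] by force
  have "norm (cscale (inverse \<mu>) z) = cmod (inverse \<mu>) * norm z" by (rule norm_cscale)
  also have "... < 1" using lt mu by (simp add: norm_inverse norm_divide field_simps)
  finally have "invertible_elem (1 - cscale (inverse \<mu>) z)" by (rule neumann)
  moreover have "cscale \<mu> 1 - z = cscale \<mu> 1 * (1 - cscale (inverse \<mu>) z)"
    using mu by (simp add: right_diff_distrib cscale_left_commute cscale_cscale cs_one)
  ultimately have "invertible_elem (cscale \<mu> 1 - z)" using inv_mult inv_cs mu by metis
  then show False using assms unfolding alg_spectrum_def by simp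
qed

lemma qn_Nq:
  assumes "quasinilpotent (w::'a::complex_banach_algebra_1)"
  shows "Nq w"
  unfolding Nq_def
proof (intro allI impI)
  fix \<mu> :: complex assume mu: "\<mu> \<noteq> 0"
  show "invertible_elem (cscale \<mu> 1 - w)"
  proof (rule ccontr)
    assume "\<not> invertible_elem (cscale \<mu> 1 - w)"
    then have m: "\<mu> \<in> alg_spectrum w" unfolding alg_spectrum_def by simp
    have "bdd_above (cmod ` alg_spectrum w)" using spec_bound by (meson bdd_aboveI2)
    then have "cmod \<mu> \<le> Sup (cmod ` alg_spectrum w)" using m by (simp add: cSup_upper)
    then have "cmod \<mu> \<le> 0" using assms unfolding quasinilpotent_def alg_spectral_radius_def by simp
    then show False using mu by simp
  qed
qed

lemma Nq_qn:
  assumes "Nq (w::'a::complex_banach_algebra_1)" "\<not> invertible_elem w"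
  shows "quasinilpotent w"
proof -
  have "alg_spectrum w = {0}"
  proof (rule set_eqI)
    fix \<mu> :: complex
    show "\<mu> \<in> alg_spectrum w \<longleftrightarrow> \<mu> \<in> {0}"
    proof (cases "\<mu> = 0")
      case True
      have "\<not> invertible_elem (- w)"
      proof
        assume "invertible_elem (- w)"
        then obtain y where "- w * y = 1" "y * - w = 1" unfolding invertible_elem_def by blast
        then have "w * (- y) = 1" "(- y) * w = 1" by simp_all
        then show False using assms(2) unfolding invertible_elem_def by blast
      qed
      then show ?thesis using True unfolding alg_spectrum_def by (simp add: cs_zero)
    next
      case False
      then show ?thesis using assms(1) unfolding alg_spectrum_def Nq_def by simp
    qed
  qed
  then show ?thesis unfolding quasinilpotent_def alg_spectral_radius_def by simp
qed

lemma g_iff: "g_drazin_invertible a \<longleftrightarrow> DP Nq (a::'a::complex_banach_algebra_1)"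
proof
  assume "g_drazin_invertible a"
  then show "DP Nq a" unfolding g_drazin_invertible_def DP_def using qn_Nq by blast
next
  assume "DP Nq a"
  then obtain b where b: "a * b = b * a" "b * a * b = b" "Nq (a * (1 - a * b))" unfolding DP_def by blast
  show "g_drazin_invertible a"
  proof (cases "invertible_elem a")
    case True
    then obtain c where c: "a * c = 1" "c * a = 1" unfolding invertible_elem_def by blast
    have "Nq (0::'a)" unfolding Nq_def by (simp add: inv_cs)
    moreover have "\<not> invertible_elem (0::'a)" unfolding invertible_elem_def by simp
    ultimately have "quasinilpotent (a * (1 - a * c))" using c Nq_qn by simp
    moreover have "c * a * c = c" using c by simp
    ultimately show ?thesis unfolding g_drazin_invertible_def using c by metis
  next
    case False
    define pi where "pi = 1 - a * b"
    have "a * b * (a * b) = a * b" using b(2) by (metis mult.assoc)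
    then have pp: "pi * pi = pi" unfolding pi_def by (simp add: algebra_simps)
    have "\<not> invertible_elem (a * pi)"
    proof
      assume "invertible_elem (a * pi)"
      then obtain t where t: "a * pi * t = 1" "t * (a * pi) = 1" unfolding invertible_elem_def by blast
      have "a * pi * pi = a * pi" using pp by (simp add: mult.assoc)
      then have "pi = t * (a * pi) * pi" using t(2) by (metis mult.assoc mult_1_left)
      also have "... = 1" using t(2) \<open>a * pi * pi = a * pi\<close> by (metis mult.assoc)
      finally have "pi = 1" .
      then have "a * pi = a" by simp
      then show False using False \<open>invertible_elem (a * pi)\<close> by simp
    qed
    then have "quasinilpotent (a * (1 - a * b))" using Nq_qn b(3) unfolding pi_def by blast
    then show ?thesis unfolding g_drazin_invertible_def using b by blast
  qed
qed

lemma d_iff: "drazin_invertible a \<longleftrightarrow> DP nilp (a::'a::ring_1)"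
  unfolding drazin_invertible_def DP_def nilp_def by blast



lemma chain:
  fixes p q W :: "'a::complex_banach_algebra_1"
  assumes g: "goodP P" and pp: "p * p = p" and qq: "q * q = q" and gm: "gg \<noteq> 0" and lm: "ll \<noteq> 0"
    and pW: "p * W = W" and Wq: "W * q = 0"
  shows "DP P (cscale gg q + W) \<longleftrightarrow> DP P (cscale ll 1 - cscale ll p + W)"
proof -
  define a1 where "a1 = 1 - cscale (inverse gg) W"
  define b1 where "b1 = 1 - q"
  define c where "c = 1 - cscale (inverse ll) W"
  have Wq': "W * (q * z) = 0" for z by (metis Wq mult.assoc mult_zero_left)
  have pW': "p * (W * z) = W * z" for z by (metis pW mult.assoc)
  have E1: "cscale gg q + W = cscale gg (1 - a1 * b1)" unfolding a1_def b1_def using gm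
    by (simp add: css algebra_simps Wq)
  have E2: "cscale gg (1 - b1 * a1) = cscale gg q + (1 - q) * W" unfolding a1_def b1_def using gm
    by (simp add: css algebra_simps)
  have E3: "(1 - q) * W = ((1 - q) * p) * W" by (simp add: mult.assoc pW)
  have E4: "W * ((1 - q) * p) = W * p" by (simp add: algebra_simps Wq')
  have E5: "cscale ll (1 - c * p) = cscale ll (1 - p) + W * p" unfolding c_def using lm
    by (simp add: css algebra_simps)
  have E6: "cscale ll (1 - p * c) = cscale ll 1 - cscale ll p + W" unfolding c_def using lm
    by (simp add: css algebra_simps pW)
  have q1: "q * ((1 - q) * W) = 0" by (simp add: left_diff_distrib right_diff_distrib mult.assoc[symmetric] qq)
  have q2: "((1 - q) * W) * q = 0" by (simp add: algebra_simps Wq' Wq)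
  have p0: "(1 - p) * (1 - p) = 1 - p" by (simp add: algebra_simps pp)
  have p1: "(1 - p) * (W * p) = 0" by (simp add: algebra_simps pW')
  have p2: "(W * p) * (1 - p) = 0" by (simp add: algebra_simps pp mult.assoc)
  have "DP P (cscale gg q + W) \<longleftrightarrow> DP P (1 - a1 * b1)" unfolding E1 using DP_scale_iff[OF g gm] .
  also have "... \<longleftrightarrow> DP P (1 - b1 * a1)" using DP_jac_iff[OF g] .
  also have "... \<longleftrightarrow> DP P (cscale gg q + (1 - q) * W)" unfolding E2[symmetric] using DP_scale_iff[OF g gm] by simp
  also have "... \<longleftrightarrow> DP P ((1 - q) * W)" using DP_block[OF g qq gm q1 q2] .
  also have "... \<longleftrightarrow> DP P (W * p)" unfolding E3 E4[symmetric] using DP_cline_iff[OF g] .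
  also have "... \<longleftrightarrow> DP P (cscale ll (1 - p) + W * p)" using DP_block[OF g p0 lm p1 p2] by simp
  also have "... \<longleftrightarrow> DP P (1 - c * p)" unfolding E5[symmetric] using DP_scale_iff[OF g lm] .
  also have "... \<longleftrightarrow> DP P (1 - p * c)" using DP_jac_iff[OF g] .
  also have "... \<longleftrightarrow> DP P (cscale ll 1 - cscale ll p + W)" unfolding E6[symmetric] using DP_scale_iff[OF g lm] by simp
  finally show ?thesis .
qed



lemma pq_left: "p * p = (p::'a::ring_1) \<Longrightarrow> p * (p * q) ^ Suc j = (p * q) ^ Suc j"
  by (simp add: mult.assoc[symmetric])

lemma pq_mid: "p * p = (p::'a::ring_1) \<Longrightarrow> p * (p * q) ^ j * p = (p * q) ^ j * p"
  by (cases j) (simp_all add: mult.assoc[symmetric])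

lemma pq_right: "q * q = (q::'a::ring_1) \<Longrightarrow> (p * q) ^ Suc j * q = (p * q) ^ Suc j"
proof -
  assume qq: "q * q = q"
  have "(p * q) ^ Suc j * q = (p * q) ^ j * p * (q * q)" by (simp only: power_Suc2 mult.assoc)
  also have "... = (p * q) ^ Suc j" unfolding qq by (simp only: power_Suc2 mult.assoc)
  finally show ?thesis .
qed

lemma term_p:
  assumes "p * p = (p::'a::ring_1)" "k \<ge> 1"
  shows "p * ((p * q) ^ (k - 1) * p - (p * q) ^ k) = (p * q) ^ (k - 1) * p - (p * q) ^ (k::nat)"
proof -
  obtain j where k: "k = Suc j" using assms(2) by (cases k) auto
  show ?thesis unfolding k using pq_left[OF assms(1)] pq_mid[OF assms(1)]
    by (simp add: right_diff_distrib mult.assoc[symmetric] del: power_Suc)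
qed

lemma term_q:
  assumes "q * q = (q::'a::ring_1)" "k \<ge> 1"
  shows "((p * q) ^ (k - 1) * p - (p * q) ^ k) * q = 0"
proof -
  obtain j where k: "k = Suc j" using assms(2) by (cases k) auto
  have "(p * q) ^ j * p * q = (p * q) ^ Suc j" by (simp only: power_Suc2 mult.assoc)
  then show ?thesis unfolding k using pq_right[OF assms(1), of p j]
    by (simp add: left_diff_distrib del: power_Suc)
qed

theorem proposition3p1:
  fixes p q :: "'a::complex_banach_algebra_1"
    and m :: nat and gam1 :: complex and lam :: "nat \<Rightarrow> complex"
  assumes "p * p = p" and "q * q = q"
    and "m \<ge> 1"
    and "lam 1 * gam1 \<noteq> 0"
  defines "S \<equiv> (\<Sum>k=2..m. cscale (lam k) ((p * q) ^ (k - 1) * p - (p * q) ^ k))"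
  defines "x \<equiv> cscale (lam 1) p + cscale gam1 q - cscale (lam 1) (p * q) + S"
    and "y \<equiv> cscale (lam 1) 1 - cscale (lam 1) (p * q) + S"
  shows "(drazin_invertible x \<longleftrightarrow> drazin_invertible y) \<and>
         (g_drazin_invertible x \<longleftrightarrow> g_drazin_invertible y)"
proof -
  define W where "W = (\<Sum>k=1..m. cscale (lam k) ((p * q) ^ (k - 1) * p - (p * q) ^ k))"
  have gm: "gam1 \<noteq> 0" and lm: "lam 1 \<noteq> 0" using assms(4) by auto
  have Wsplit: "W = cscale (lam 1) p - cscale (lam 1) (p * q) + S"
  proof -
    have "W = cscale (lam 1) ((p * q) ^ (1 - 1) * p - (p * q) ^ 1) + (\<Sum>k=Suc 1..m. cscale (lam k) ((p * q) ^ (k - 1) * p - (p * q) ^ k))"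
      unfolding W_def using assms(3) by (rule sum.atLeast_Suc_atMost)
    then show ?thesis unfolding S_def by (simp add: cs_diff numeral_2_eq_2)
  qed
  have xW: "x = cscale gam1 q + W" unfolding x_def Wsplit by (simp add: algebra_simps)
  have yW: "y = cscale (lam 1) 1 - cscale (lam 1) p + W" unfolding y_def Wsplit by (simp add: algebra_simps)
  have pW: "p * W = W" unfolding W_def sum_distrib_left
  proof (intro sum.cong refl)
    fix k assume "k \<in> {1..m}"
    then have k1: "k \<ge> 1" by simp
    show "p * cscale (lam k) ((p * q) ^ (k - 1) * p - (p * q) ^ k) = cscale (lam k) ((p * q) ^ (k - 1) * p - (p * q) ^ k)"
      unfolding cscale_right_commute term_p[OF assms(1) k1] ..
  qed
  have Wq: "W * q = 0" unfolding W_def sum_distrib_right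
  proof (intro sum.neutral ballI)
    fix k assume "k \<in> {1..m}"
    then have k1: "k \<ge> 1" by simp
    show "cscale (lam k) ((p * q) ^ (k - 1) * p - (p * q) ^ k) * q = 0"
      unfolding cscale_left_commute term_q[OF assms(2) k1] cs0 ..
  qed
  have "drazin_invertible x \<longleftrightarrow> drazin_invertible y"
    unfolding d_iff xW yW using chain[OF goodP_nilp assms(1,2) gm lm pW Wq] .
  moreover have "g_drazin_invertible x \<longleftrightarrow> g_drazin_invertible y"
    unfolding g_iff xW yW using chain[OF goodP_Nq assms(1,2) gm lm pW Wq] .
  ultimately show ?thesis by blast
qed


end
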